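(* Let $\{e_1,\dots,e_n\}$ be a basis of the free abelian group $\mathbb Z^n$, and let $$\widetilde V=\{e_1,\dots,e_n\}\cup\{e_i-e_j:1\le i<j\le n\}.$$ For any $v,v_1,\dots,v_k\in\widetilde V$, if the subgroup of $\mathbb Z^n$ generated by $\{v_1,\dots,v_k\}$ contains some non-zero multiple of $v$, then it contains $v$. *)

theory Defs
  imports Main
begin

text \<open>Z^n is modelled as integer vectors x :: nat \<Rightarrow> int with x t = 0 for t \<ge> n
  (coordinates indexed 0..n-1). Group operations are pointwise.\<close>

definition Zn :: "nat \<Rightarrow> (nat \<Rightarrow> int) set" where
  "Zn n = {x. \<forall>t\<ge>n. x t = 0}"

definition is_Z_basis :: "nat \<Rightarrow> (nat \<Rightarrow> nat \<Rightarrow> int) \<Rightarrow> bool" where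
  "is_Z_basis n e \<longleftrightarrow>
     (\<forall>i\<in>{1..n}. e i \<in> Zn n) \<and>
     (\<forall>x\<in>Zn n. \<exists>!c::nat \<Rightarrow> int. (\<forall>i. i \<notin> {1..n} \<longrightarrow> c i = 0) \<and>
                      x = (\<lambda>t. \<Sum>i=1..n. c i * e i t))"

definition Vtilde :: "nat \<Rightarrow> (nat \<Rightarrow> nat \<Rightarrow> int) \<Rightarrow> (nat \<Rightarrow> int) set" where
  "Vtilde n e = {e i | i. i \<in> {1..n}} \<union>
                {(\<lambda>t. e i t - e j t) | i j. 1 \<le> i \<and> i < j \<and> j \<le> n}"

definition gen_subgroup :: "nat \<Rightarrow> (nat \<Rightarrow> nat \<Rightarrow> int) \<Rightarrow> (nat \<Rightarrow> int) set" where
  "gen_subgroup k vs = {(\<lambda>t. \<Sum>i=1..k. c i * vs i t) | c :: nat \<Rightarrow> int. True}"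

end

theory Submission
  imports Defs
begin

lemma gs_intro:
  assumes "x = (\<lambda>t. \<Sum>i=1..k. c i * vs i t)"
  shows "x \<in> gen_subgroup k vs"
  using assms unfolding gen_subgroup_def by blast

lemma gs_add:
  assumes "x \<in> gen_subgroup k vs" "y \<in> gen_subgroup k vs"
  shows "(\<lambda>t. x t + y t) \<in> gen_subgroup k vs"
proof -
  obtain c where c: "x = (\<lambda>t. \<Sum>i=1..k. c i * vs i t)" using assms(1) unfolding gen_subgroup_def by blast
  obtain d where d: "y = (\<lambda>t. \<Sum>i=1..k. d i * vs i t)" using assms(2) unfolding gen_subgroup_def by blast
  have "(\<lambda>t. x t + y t) = (\<lambda>t. \<Sum>i=1..k. (c i + d i) * vs i t)"
    by (simp add: c d sum.distrib distrib_right)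
  then show ?thesis by (rule gs_intro)
qed

lemma gs_neg:
  assumes "x \<in> gen_subgroup k vs"
  shows "(\<lambda>t. - x t) \<in> gen_subgroup k vs"
proof -
  obtain c where c: "x = (\<lambda>t. \<Sum>i=1..k. c i * vs i t)" using assms(1) unfolding gen_subgroup_def by blast
  have "(\<lambda>t. - x t) = (\<lambda>t. \<Sum>i=1..k. (- c i) * vs i t)"
    by (simp add: c sum_negf)
  then show ?thesis by (rule gs_intro)
qed

lemma gs_zero: "(\<lambda>t. 0) \<in> gen_subgroup k vs"
proof -
  have "(\<lambda>t. 0::int) = (\<lambda>t. \<Sum>i=1..k. (0::int) * vs i t)" by simp
  then show ?thesis by (rule gs_intro)
qed

lemma gs_gen:
  assumes "l \<in> {1..k}"
  shows "vs l \<in> gen_subgroup k vs"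
proof -
  have "vs l = (\<lambda>t. \<Sum>i=1..k. (if i = l then 1 else 0) * vs i t)"
  proof
    fix t
    have "(\<Sum>i=1..k. (if i = l then 1 else 0) * vs i t) = (\<Sum>i=1..k. if i = l then vs i t else 0)"
      by (rule sum.cong) auto
    then show "vs l t = (\<Sum>i=1..k. (if i = l then 1 else 0) * vs i t)" using assms by simp
  qed
  then show ?thesis by (rule gs_intro)
qed

lemma basis_unique:
  assumes "is_Z_basis n e"
    and eq: "(\<lambda>t. \<Sum>i=1..n. d i * e i t) = (\<lambda>t. \<Sum>i=1..n. d' i * e i t)"
    and "i \<in> {1..n}"
  shows "d i = d' i"
proof -
  define x where "x = (\<lambda>t. \<Sum>i=1..n. d i * e i t)"
  have ein: "\<forall>i\<in>{1..n}. e i \<in> Zn n" and ex: "\<forall>x\<in>Zn n. \<exists>!c::nat \<Rightarrow> int. (\<forall>i. i \<notin> {1..n} \<longrightarrow> c i = 0) \<and>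
                      x = (\<lambda>t. \<Sum>i=1..n. c i * e i t)"
    using assms(1) unfolding is_Z_basis_def by auto
  have "x \<in> Zn n" using ein unfolding x_def Zn_def by auto
  then have u: "\<exists>!c::nat \<Rightarrow> int. (\<forall>i. i \<notin> {1..n} \<longrightarrow> c i = 0) \<and>
                      x = (\<lambda>t. \<Sum>i=1..n. c i * e i t)" using ex by blast
  define c1 where "c1 = (\<lambda>i. if i \<in> {1..n} then d i else 0)"
  define c2 where "c2 = (\<lambda>i. if i \<in> {1..n} then d' i else 0)"
  have h1: "(\<forall>i. i \<notin> {1..n} \<longrightarrow> c1 i = 0) \<and> x = (\<lambda>t. \<Sum>i=1..n. c1 i * e i t)"
    unfolding c1_def x_def by (auto intro!: sum.cong)
  have h2: "(\<forall>i. i \<notin> {1..n} \<longrightarrow> c2 i = 0) \<and> x = (\<lambda>t. \<Sum>i=1..n. c2 i * e i t)"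
    unfolding c2_def x_def eq by (auto intro!: sum.cong)
  have "c1 = c2" using u h1 h2 by blast
  then have "c1 i = c2 i" by simp
  then show ?thesis using assms(3) unfolding c1_def c2_def by simp
qed

theorem propositionA1:
  fixes n k :: nat and e vs :: "nat \<Rightarrow> nat \<Rightarrow> int" and v :: "nat \<Rightarrow> int"
  assumes "is_Z_basis n e"
    and "v \<in> Vtilde n e"
    and "\<forall>i\<in>{1..k}. vs i \<in> Vtilde n e"
    and "\<exists>m::int. m \<noteq> 0 \<and> (\<lambda>t. m * v t) \<in> gen_subgroup k vs"
  shows "v \<in> gen_subgroup k vs"
proof -
  define E where "E j = (if j = 0 then (\<lambda>t. 0::int) else e j)" for j
  have Vt: "\<exists>a b. a \<le> n \<and> b \<le> n \<and> x = (\<lambda>t. E a t - E b t)" if "x \<in> Vtilde n e" for x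
  proof -
    from that consider (A) i where "i \<in> {1..n}" "x = e i"
      | (B) i j where "1 \<le> i" "i < j" "j \<le> n" "x = (\<lambda>t. e i t - e j t)"
      unfolding Vtilde_def by blast
    then show ?thesis
    proof cases
      case (A i)
      then show ?thesis by (intro exI[of _ i] exI[of _ 0]) (auto simp: E_def)
    next
      case (B i j)
      then show ?thesis by (intro exI[of _ i] exI[of _ j]) (auto simp: E_def)
    qed
  qed
  obtain a b where ab: "a \<le> n" "b \<le> n" "v = (\<lambda>t. E a t - E b t)" using Vt assms(2) by blast
  have "\<forall>l\<in>{1..k}. \<exists>pq. fst pq \<le> n \<and> snd pq \<le> n \<and> vs l = (\<lambda>t. E (fst pq) t - E (snd pq) t)"
    using Vt assms(3) by fastforce
  then obtain pq where pq: "\<And>l. l\<in>{1..k} \<Longrightarrow> fst (pq l) \<le> n \<and> snd (pq l) \<le> n \<and>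
        vs l = (\<lambda>t. E (fst (pq l)) t - E (snd (pq l)) t)"
    by metis
  define p where "p l = fst (pq l)" for l
  define q where "q l = snd (pq l)" for l
  have pqn: "p l \<le> n" "q l \<le> n" "vs l = (\<lambda>t. E (p l) t - E (q l) t)" if "l \<in> {1..k}" for l
    using pq[OF that] unfolding p_def q_def by auto
  define R where "R = {(p l, q l) | l. l \<in> {1..k}} \<union> {(q l, p l) | l. l \<in> {1..k}}"
  define C where "C = {j. (a, j) \<in> R\<^sup>*}"
  show ?thesis
  proof (cases "b \<in> C")
    case True
    have "(\<lambda>t. E a t - E z t) \<in> gen_subgroup k vs" if "(a, z) \<in> R\<^sup>*" for z
      using that
    proof (induction rule: rtrancl_induct)
      case base
      then show ?case using gs_zero by simp
    next
      case (step y z)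
      have yz: "(\<lambda>t. E y t - E z t) \<in> gen_subgroup k vs"
      proof -
        from step(2) obtain l where l: "l \<in> {1..k}" "(y = p l \<and> z = q l) \<or> (y = q l \<and> z = p l)"
          unfolding R_def by blast
        have g: "(\<lambda>t. E (p l) t - E (q l) t) \<in> gen_subgroup k vs"
          using gs_gen[of l k vs, OF l(1)] pqn(3)[OF l(1)] by simp
        show ?thesis using l(2)
        proof
          assume "y = p l \<and> z = q l" then show ?thesis using g by simp
        next
          assume "y = q l \<and> z = p l" then show ?thesis using gs_neg[OF g] by simp
        qed
      qed
      have "(\<lambda>t. (E a t - E y t) + (E y t - E z t)) \<in> gen_subgroup k vs"
        using gs_add[OF step(3) yz] by simp
      then show ?case by simp
    qed
    then show ?thesis using True ab(3) unfolding C_def by simp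
  next
    case False
    from assms(4) obtain m c where m: "m \<noteq> 0"
      and mc: "(\<lambda>t. m * v t) = (\<lambda>t. \<Sum>l=1..k. c l * vs l t)"
      unfolding gen_subgroup_def by blast
    define \<delta> where "\<delta> j i = (if i = j then 1 else (0::int))" for j i :: nat
    have Erep: "E j t = (\<Sum>i=1..n. \<delta> j i * e i t)" if "j \<le> n" for j t
    proof -
      have "(\<Sum>i=1..n. \<delta> j i * e i t) = (\<Sum>i=1..n. if i = j then e i t else 0)"
        by (rule sum.cong) (auto simp: \<delta>_def)
      then show ?thesis using that by (auto simp: E_def)
    qed
    define D1 where "D1 i = m * (\<delta> a i - \<delta> b i)" for i
    define D2 where "D2 i = (\<Sum>l=1..k. c l * (\<delta> (p l) i - \<delta> (q l) i))" for i
    have lhs: "m * v t = (\<Sum>i=1..n. D1 i * e i t)" for t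
      by (simp add: ab Erep D1_def sum_distrib_left sum_subtractf[symmetric] algebra_simps)
    have rhs: "(\<Sum>l=1..k. c l * vs l t) = (\<Sum>i=1..n. D2 i * e i t)" for t
    proof -
      have "(\<Sum>l=1..k. c l * vs l t) = (\<Sum>l=1..k. \<Sum>i=1..n. c l * (\<delta> (p l) i - \<delta> (q l) i) * e i t)"
        by (rule sum.cong) (simp_all add: pqn Erep sum_distrib_left sum_subtractf[symmetric] algebra_simps)
      also have "\<dots> = (\<Sum>i=1..n. D2 i * e i t)"
        by (subst sum.swap) (simp add: D2_def sum_distrib_right)
      finally show ?thesis .
    qed
    have DD: "D1 i = D2 i" if "i \<in> {1..n}" for i
      using basis_unique[OF assms(1) _ that, of D1 D2] mc lhs rhs by metis
    define S where "S = (if 0 \<in> C then {1..n} - C else {1..n} \<inter> C)"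
    have aC: "a \<in> C" unfolding C_def by simp
    have closed: "p l \<in> C \<longleftrightarrow> q l \<in> C" if "l \<in> {1..k}" for l
    proof -
      have "(p l, q l) \<in> R" "(q l, p l) \<in> R" using that unfolding R_def by blast+
      then show ?thesis unfolding C_def using rtrancl_into_rtrancl by (metis mem_Collect_eq)
    qed
    have Sclosed: "p l \<in> S \<longleftrightarrow> q l \<in> S" if "l \<in> {1..k}" for l
      using closed[OF that] pqn[OF that] unfolding S_def
      by (cases "p l = 0"; cases "q l = 0"; auto)
    have Ssub: "S \<subseteq> {1..n}" unfolding S_def by auto
    have fS: "finite S" using Ssub finite_subset by blast
    have "(\<Sum>i\<in>S. D2 i) = (\<Sum>l=1..k. c l * ((\<Sum>i\<in>S. \<delta> (p l) i) - (\<Sum>i\<in>S. \<delta> (q l) i)))"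
      unfolding D2_def by (subst sum.swap) (simp add: sum_distrib_left[symmetric] sum_subtractf)
    also have "\<dots> = 0"
      using Sclosed fS by (intro sum.neutral) (auto simp: \<delta>_def)
    finally have s2: "(\<Sum>i\<in>S. D2 i) = 0" .
    have "(\<Sum>i\<in>S. D1 i) = m * ((\<Sum>i\<in>S. \<delta> a i) - (\<Sum>i\<in>S. \<delta> b i))"
      unfolding D1_def by (simp only: sum_distrib_left[symmetric] sum_subtractf)
    also have "\<dots> = m * ((if a \<in> S then 1 else 0) - (if b \<in> S then 1 else 0))"
      using fS by (simp add: \<delta>_def sum.delta)
    also have "\<dots> \<noteq> 0"
    proof (cases "0 \<in> C")
      case True
      have "b \<noteq> 0" using True False by metis
      then have "a \<notin> S" "b \<in> S" using True aC False ab(2) unfolding S_def by auto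
      then show ?thesis using m by simp
    next
      case F: False
      have "a \<noteq> 0" using F aC by metis
      then have "a \<in> S" "b \<notin> S" using F aC False ab(1) unfolding S_def by auto
      then show ?thesis using m by simp
    qed
    finally have "(\<Sum>i\<in>S. D1 i) \<noteq> 0" .
    moreover have "(\<Sum>i\<in>S. D1 i) = (\<Sum>i\<in>S. D2 i)" using DD Ssub by (intro sum.cong) auto
    ultimately show ?thesis using s2 by simp
  qed
qed

end
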